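(* Let $H$ and $H'$ be uniform hypertrees (each $s$-uniform for some $s\ge2$) with $X_H=X_{H'}$. Then $H$ and $H'$ have the same degree sequence; that is, the degree sequence of a uniform hypertree is determined by its chromatic symmetric function.
   Context: A hypergraph $H=(V,E)$ has $V$ finite and $E$ a set of subsets of $V$ of size at least $2$; it is $s$-uniform if all hyperedges have size $s$. A walk is a sequence $(v_1,e_1,\dots,v_\ell,e_\ell,v_{\ell+1})$, $\ell>0$, with $v_i,v_{i+1}\in e_i\in E$; a path has all vertices and hyperedges distinct; a cycle has $\ell\ge2$ and all vertices and hyperedges distinct except $v_1=v_{\ell+1}$. A hypertree is a connected (any two vertices joined by a path) hypergraph with no cycles. The chromatic symmetric function is $X_H=\sum_f\prod_{v\in V}x_{f(v)}$ in commuting variables $x_1,x_2,\dots$, summed over all $f:V\to\{1,2,\dots\}$ under which no hyperedge is monochromatic. The degree of $v$ is $|\{e\in E: v\in e\}|$, and the degree sequence is the multiset of all vertex degrees listed in weakly decreasing order. *)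

theory Defs
  imports Main "HOL-Library.FuncSet" "HOL-Library.Multiset"
begin

definition hypergraph :: "'a set \<Rightarrow> 'a set set \<Rightarrow> bool" where
  "hypergraph V E \<longleftrightarrow> finite V \<and> (\<forall>e\<in>E. e \<subseteq> V \<and> card e \<ge> 2)"

definition uniform :: "nat \<Rightarrow> 'a set set \<Rightarrow> bool" where
  "uniform s E \<longleftrightarrow> (\<forall>e\<in>E. card e = s)"

definition is_walk :: "'a set set \<Rightarrow> 'a list \<Rightarrow> 'a set list \<Rightarrow> bool" where
  "is_walk E vs es \<longleftrightarrow> es \<noteq> [] \<and> length vs = Suc (length es) \<and>
     (\<forall>i<length es. es ! i \<in> E \<and> vs ! i \<in> es ! i \<and> vs ! Suc i \<in> es ! i)"

definition is_path :: "'a set set \<Rightarrow> 'a list \<Rightarrow> 'a set list \<Rightarrow> bool" where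
  "is_path E vs es \<longleftrightarrow> is_walk E vs es \<and> distinct vs \<and> distinct es"

definition is_cycle :: "'a set set \<Rightarrow> 'a list \<Rightarrow> 'a set list \<Rightarrow> bool" where
  "is_cycle E vs es \<longleftrightarrow> is_walk E vs es \<and> length es \<ge> 2 \<and>
     distinct (butlast vs) \<and> distinct es \<and> hd vs = last vs"

definition connected_hg :: "'a set \<Rightarrow> 'a set set \<Rightarrow> bool" where
  "connected_hg V E \<longleftrightarrow> (\<forall>u\<in>V. \<forall>v\<in>V. u \<noteq> v \<longrightarrow>
     (\<exists>vs es. is_path E vs es \<and> hd vs = u \<and> last vs = v))"

definition hypertree :: "'a set \<Rightarrow> 'a set set \<Rightarrow> bool" where
  "hypertree V E \<longleftrightarrow> hypergraph V E \<and> connected_hg V E \<and> \<not> (\<exists>vs es. is_cycle E vs es)"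

definition proper_colouring :: "'a set set \<Rightarrow> ('a \<Rightarrow> nat) \<Rightarrow> bool" where
  "proper_colouring E f \<longleftrightarrow> (\<forall>e\<in>E. \<not> (\<exists>c. \<forall>v\<in>e. f v = c))"

text \<open>The chromatic symmetric function X_H, represented by its coefficient function:
  the coefficient of the monomial prod_i x_i^(alpha i) is the number of proper colourings
  f : V \<rightarrow> colours with exactly alpha i vertices of colour i.  (Colours are indexed by nat.)\<close>
definition csf :: "'a set \<Rightarrow> 'a set set \<Rightarrow> (nat \<Rightarrow> nat) \<Rightarrow> nat" where
  "csf V E \<alpha> = card {f \<in> V \<rightarrow>\<^sub>E (UNIV :: nat set). proper_colouring E f \<and>
        (\<forall>i. card {v\<in>V. f v = i} = \<alpha> i)}"

definition degree :: "'a set set \<Rightarrow> 'a \<Rightarrow> nat" where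
  "degree E v = card {e\<in>E. v \<in> e}"

definition degree_sequence :: "'a set \<Rightarrow> 'a set set \<Rightarrow> nat list" where
  "degree_sequence V E = rev (sorted_list_of_multiset (image_mset (degree E) (mset_set V)))"

end

theory Submission
  imports Defs "HOL-Computational_Algebra.Polynomial"
begin

lemma cycle_from_path:
  assumes P: "is_path E vs es" and ij: "i < j" "j < length vs" and g: "g \<in> E"
    "g \<notin> set (drop i (take j es))" "vs!i \<in> g" "vs!j \<in> g"
  shows "\<exists>vs es. is_cycle E vs es"
proof -
  have W: "is_walk E vs es" and dv: "distinct vs" and de: "distinct es" using P by (auto simp: is_path_def)
  have len: "length vs = Suc (length es)" and wk: "\<And>t. t < length es \<Longrightarrow> es ! t \<in> E \<and> vs ! t \<in> es ! t \<and> vs ! Suc t \<in> es ! t"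
    using W by (auto simp: is_walk_def)
  define seg where "seg = drop i (take j es)"
  define sv where "sv = drop i (take (Suc j) vs)"
  have lseg: "length seg = j - i" using ij len by (simp add: seg_def)
  have lsv: "length sv = Suc j - i" using ij len by (simp add: sv_def)
  have segn: "t < j - i \<Longrightarrow> seg ! t = es ! (i + t)" for t using ij len by (simp add: seg_def)
  have svn: "t \<le> j - i \<Longrightarrow> sv ! t = vs ! (i + t)" for t using ij len by (simp add: sv_def)
  have "is_cycle E (sv @ [vs!i]) (seg @ [g])"
    unfolding is_cycle_def is_walk_def
  proof (intro conjI)
    show "seg @ [g] \<noteq> []" by simp
    show "length (sv @ [vs ! i]) = Suc (length (seg @ [g]))" using lseg lsv ij by simp
    show "2 \<le> length (seg @ [g])" using lseg ij by simp
    show "distinct (butlast (sv @ [vs ! i]))" using dv by (simp add: sv_def distinct_drop distinct_take)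
    show "distinct (seg @ [g])" using de g(2) by (simp add: seg_def distinct_drop distinct_take)
    show "hd (sv @ [vs ! i]) = last (sv @ [vs ! i])"
      using lsv ij svn[of 0] by (simp add: hd_append hd_conv_nth)
    show "\<forall>t < length (seg @ [g]). (seg @ [g]) ! t \<in> E \<and> (sv @ [vs ! i]) ! t \<in> (seg @ [g]) ! t \<and> (sv @ [vs ! i]) ! Suc t \<in> (seg @ [g]) ! t"
    proof (intro allI impI)
    fix t assume t: "t < length (seg @ [g])"
    show "(seg @ [g]) ! t \<in> E \<and> (sv @ [vs ! i]) ! t \<in> (seg @ [g]) ! t \<and> (sv @ [vs ! i]) ! Suc t \<in> (seg @ [g]) ! t"
    proof (cases "t < j - i")
      case True
      then have "i + t < length es" using ij len by simp
      moreover have "Suc t < Suc j - i" "t < Suc j - i" using True by auto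
      ultimately show ?thesis using wk True lseg lsv segn[OF True] svn[of t] svn[of "Suc t"]
        by (simp add: nth_append)
    next
      case False
      then have tt: "t = j - i" using t lseg by simp
      have "Suc j - i = Suc (j - i)" using ij by simp
      then show ?thesis using tt lseg lsv g svn[of t] ij by (simp add: nth_append)
    qed
    qed
  qed
  then show ?thesis by blast
qed

lemma other_elem: assumes "card e \<ge> 2" "x \<in> e" shows "\<exists>y\<in>e. y \<noteq> x"
proof (rule ccontr)
  assume "\<not> (\<exists>y\<in>e. y \<noteq> x)"
  then have "e \<subseteq> {x}" by auto
  then have "card e \<le> card {x}" using card_mono[of "{x}" e] by simp
  then show False using assms(1) by simp
qed

lemma some_elem: assumes "card e \<ge> 2" shows "\<exists>x. x \<in> e"
proof -
  have "e \<noteq> {}" using assms by auto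
  then show ?thesis by blast
qed

lemma path_len_bound: "is_path E vs es \<Longrightarrow> finite E \<Longrightarrow> length es \<le> card E"
proof -
  assume p: "is_path E vs es" and f: "finite E"
  have "set es \<subseteq> E" using p unfolding is_path_def is_walk_def by (auto simp: in_set_conv_nth)
  moreover have "distinct es" using p by (simp add: is_path_def)
  ultimately show ?thesis using f by (metis card_mono distinct_card)
qed

lemma leaf_edge:
  assumes fin: "finite E" and c2: "\<forall>e\<in>E. card e \<ge> 2" and ac: "\<not>(\<exists>vs es. is_cycle E vs es)" and ne: "E \<noteq> {}"
  shows "\<exists>e\<in>E. \<exists>x\<in>e. \<forall>w\<in>e-{x}. \<forall>f\<in>E. w \<in> f \<longrightarrow> f = e"
proof -
  obtain e where e: "e \<in> E" using ne by blast
  have ce: "card e \<ge> 2" using c2 e by auto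
  then obtain x y where xy: "x \<in> e" "y \<in> e" "x \<noteq> y"
  proof -
    obtain x where x: "x \<in> e" using some_elem[OF ce] by blast
    obtain y where "y \<in> e" "y \<noteq> x" using other_elem[OF ce x] by blast
    then show ?thesis using that x by blast
  qed
  have "is_path E [x,y] [e]" using xy e by (auto simp: is_path_def is_walk_def)
  then have "\<exists>vs es. is_path E vs es \<and> length es = 1" by fastforce
  then obtain n where n: "\<exists>vs es. is_path E vs es \<and> length es = n"
     and nmax: "\<forall>n'. (\<exists>vs es. is_path E vs es \<and> length es = n') \<longrightarrow> n' \<le> n"
    using Nat.ex_has_greatest_nat[of "\<lambda>n. \<exists>vs es. is_path E vs es \<and> length es = n" 1 "card E"]
      path_len_bound[OF _ fin] by blast
  then obtain vs es where P: "is_path E vs es" and ln: "length es = n" by blast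
  have maxp: "\<And>vs' es'. is_path E vs' es' \<Longrightarrow> length es' \<le> length es" using nmax ln by blast
  have W: "is_walk E vs es" and dv: "distinct vs" and de: "distinct es" using P by (auto simp: is_path_def)
  have len: "length vs = Suc (length es)" and esne: "es \<noteq> []"
    and wk: "\<And>t. t < length es \<Longrightarrow> es ! t \<in> E \<and> vs ! t \<in> es ! t \<and> vs ! Suc t \<in> es ! t"
    using W by (auto simp: is_walk_def)
  obtain e0 es1 where es: "es = e0 # es1" using esne by (cases es) auto
  obtain v0 rest where vs: "vs = v0 # rest" using len by (cases vs) auto
  have restne: "rest \<noteq> []" using len vs es by auto
  define v1 where "v1 = vs ! 1"
  have e0E: "e0 \<in> E" and v1e0: "v1 \<in> e0" using wk[of 0] es by (auto simp: v1_def)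
  have "\<forall>w\<in>e0-{v1}. \<forall>f\<in>E. w \<in> f \<longrightarrow> f = e0"
  proof (intro ballI impI, rule ccontr)
    fix w f assume w: "w \<in> e0 - {v1}" and fE: "f \<in> E" and wf: "w \<in> f" and fne: "f \<noteq> e0"
    have wnr: "w \<notin> set rest"
    proof
      assume "w \<in> set rest"
      then obtain j' where "j' < length rest" "rest ! j' = w" by (auto simp: in_set_conv_nth)
      then have j: "Suc j' < length vs" "vs ! Suc j' = w" "Suc j' \<ge> 1" using vs by auto
      have j'0: "j' \<noteq> 0"
      proof
        assume "j' = 0" then have "vs ! 1 = w" using j by simp
        then show False using w by (simp add: v1_def)
      qed
      have j2: "1 < Suc j'" using j'0 by simp
      have "e0 \<notin> set (take j' es1)" using de es by (auto dest: in_set_takeD)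
      then have "e0 \<notin> set (drop 1 (take (Suc j') es))" using es by simp
      moreover have jl: "Suc j' < length vs" "vs ! Suc j' = w" using j by simp_all
      moreover have "vs ! 1 \<in> e0" using v1e0 by (simp add: v1_def)
      moreover have "w \<in> e0" using w by simp
      ultimately have "\<exists>vs es. is_cycle E vs es" using cycle_from_path[OF P j2 jl(1) e0E] by simp
      then show False using ac by blast
    qed
    define Q where "Q = w # rest"
    have Qn: "t \<ge> 1 \<Longrightarrow> Q ! t = vs ! t" for t by (cases t) (auto simp: Q_def vs)
    have QP: "is_path E Q es"
      unfolding is_path_def is_walk_def
    proof (intro conjI)
      show "es \<noteq> []" by fact
      show "length Q = Suc (length es)" using len by (simp add: Q_def vs)
      show "distinct Q" using dv wnr by (simp add: Q_def vs)
      show "distinct es" by fact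
      show "\<forall>i<length es. es ! i \<in> E \<and> Q ! i \<in> es ! i \<and> Q ! Suc i \<in> es ! i"
      proof (intro allI impI)
        fix i assume i: "i < length es"
        show "es ! i \<in> E \<and> Q ! i \<in> es ! i \<and> Q ! Suc i \<in> es ! i"
        proof (cases i)
          case 0 then show ?thesis using w e0E v1e0 es by (simp add: Q_def v1_def vs)
        next
          case (Suc i') then show ?thesis using wk[OF i] Qn[of i] Qn[of "Suc i"] by simp
        qed
      qed
    qed
    show False
    proof (cases "f \<in> set es")
      case True
      then obtain i where i: "i < length es" "es ! i = f" by (auto simp: in_set_conv_nth)
      have i0: "0 < i" using i fne es by (cases i) auto
      have "f \<notin> set (drop 0 (take i es))" using de i by (auto simp: in_set_conv_nth nth_eq_iff_index_eq)
      moreover have "Q ! i \<in> f" using Qn[of i] i0 wk[OF i(1)] i by simp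
      ultimately show False using cycle_from_path[OF QP i0 _ fE] i len wf ac
        by (auto simp: Q_def vs)
    next
      case False
      have cf: "card f \<ge> 2" using c2 fE by auto
      then obtain z where z: "z \<in> f" "z \<noteq> w" using other_elem[OF cf wf] by blast
      show False
      proof (cases "z \<in> set Q")
        case True
        then obtain j where j: "j < length Q" "Q ! j = z" by (auto simp: in_set_conv_nth)
        have j0: "0 < j" using j z by (cases j) (auto simp: Q_def)
        have "f \<notin> set (drop 0 (take j es))" using False by (meson in_set_takeD in_set_dropD)
        then show False using cycle_from_path[OF QP j0 j(1) fE] wf j z ac by (auto simp: Q_def)
      next
        case zQ: False
        have "is_path E (z # Q) (f # es)"
          unfolding is_path_def is_walk_def
        proof (intro conjI)
          show "f # es \<noteq> []" by simp
          show "length (z # Q) = Suc (length (f # es))" using len by (simp add: Q_def vs)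
          show "distinct (z # Q)" using QP zQ by (simp add: is_path_def)
          show "distinct (f # es)" using de False by simp
          show "\<forall>i<length (f # es). (f # es) ! i \<in> E \<and> (z # Q) ! i \<in> (f # es) ! i \<and> (z # Q) ! Suc i \<in> (f # es) ! i"
          proof (intro allI impI)
            fix i assume i: "i < length (f # es)"
            show "(f # es) ! i \<in> E \<and> (z # Q) ! i \<in> (f # es) ! i \<and> (z # Q) ! Suc i \<in> (f # es) ! i"
            proof (cases i)
              case 0 then show ?thesis using fE z wf by (simp add: Q_def)
            next
              case (Suc i') then show ?thesis using QP i unfolding is_path_def is_walk_def by simp
            qed
          qed
        qed
        from maxp[OF this] show False by simp
      qed
    qed
  qed
  then show ?thesis using e0E v1e0 by blast
qed

definition chi :: "'a set \<Rightarrow> 'a set set \<Rightarrow> nat \<Rightarrow> nat" where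
  "chi V E k = card {f \<in> V \<rightarrow>\<^sub>E {0..<k}. proper_colouring E f}"

lemma card_nonconst:
  assumes "finite W" "c < k"
  shows "card {h \<in> W \<rightarrow>\<^sub>E {0..<(k::nat)}. \<not>(\<forall>w\<in>W. h w = c)} = k ^ card W - 1"
proof -
  have "{h \<in> W \<rightarrow>\<^sub>E {0..<k}. \<not>(\<forall>w\<in>W. h w = c)} = (W \<rightarrow>\<^sub>E {0..<k}) - {restrict (\<lambda>_. c) W}"
    by (auto simp: PiE_def extensional_def restrict_def fun_eq_iff split: if_splits)
  moreover have "restrict (\<lambda>_. c) W \<in> W \<rightarrow>\<^sub>E {0..<k}" using assms by auto
  moreover have "card (W \<rightarrow>\<^sub>E {0..<k}) = k ^ card W" using assms by (simp add: card_PiE)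
  ultimately show ?thesis by (simp add: card_Diff_singleton finite_PiE)
qed

lemma chi_leaf:
  assumes fV: "finite V" and e0: "e0 \<in> E" "x \<in> e0" "e0 \<subseteq> V"
    and oth: "\<forall>e\<in>E - {e0}. e \<subseteq> V - (e0 - {x})" and fe: "finite e0"
  shows "chi V E k = chi (V - (e0-{x})) (E - {e0}) k * (k^(card e0 - 1) - 1)"
proof -
  define W where "W = e0 - {x}"
  define V' where "V' = V - W"
  define E' where "E' = E - {e0}"
  define P where "P = {f \<in> V \<rightarrow>\<^sub>E {0..<k}. proper_colouring E f}"
  define P' where "P' = {g \<in> V' \<rightarrow>\<^sub>E {0..<k}. proper_colouring E' g}"
  define B where "B g = {h \<in> W \<rightarrow>\<^sub>E {0..<k}. \<not>(\<forall>w\<in>W. h w = g x)}" for g :: "'a \<Rightarrow> nat"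
  have WV: "W \<subseteq> V" using e0 by (auto simp: W_def)
  have xV': "x \<in> V'" using e0 by (auto simp: V'_def W_def)
  have disj: "W \<inter> V' = {}" by (auto simp: V'_def)
  have e0eq: "e0 = insert x W" using e0 by (auto simp: W_def)
  have E'sub: "\<And>e. e \<in> E' \<Longrightarrow> e \<subseteq> V'" using oth by (auto simp: E'_def V'_def W_def)
  have Eeq: "E = insert e0 E'" using e0 by (auto simp: E'_def)
  have nm0: "\<not>(\<exists>c. \<forall>v\<in>e0. f v = c) \<longleftrightarrow> \<not>(\<forall>w\<in>W. f w = f x)" for f :: "'a \<Rightarrow> nat"
    using e0eq by auto
  have prop_iff: "proper_colouring E f \<longleftrightarrow> proper_colouring E' (restrict f V') \<and> \<not>(\<forall>w\<in>W. f w = f x)"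
    for f :: "'a \<Rightarrow> nat"
  proof -
    have "proper_colouring E' (restrict f V') \<longleftrightarrow> proper_colouring E' f"
      unfolding proper_colouring_def
    proof (intro ball_cong refl)
      fix e assume "e \<in> E'"
      then have "e \<subseteq> V'" by (rule E'sub)
      then show "(\<not>(\<exists>c. \<forall>v\<in>e. restrict f V' v = c)) = (\<not>(\<exists>c. \<forall>v\<in>e. f v = c))"
        by (auto simp: restrict_def subset_iff)
    qed
    moreover have "proper_colouring E f \<longleftrightarrow> proper_colouring E' f \<and> \<not>(\<exists>c. \<forall>v\<in>e0. f v = c)"
      unfolding proper_colouring_def using Eeq by auto
    ultimately show ?thesis using nm0 by simp
  qed
  define \<phi> where "\<phi> f = (restrict f V', restrict f W)" for f :: "'a \<Rightarrow> nat"
  define \<psi> where "\<psi> gh = (\<lambda>v. if v \<in> V' then fst gh v else snd gh v)" for gh :: "('a \<Rightarrow> nat) \<times> ('a \<Rightarrow> nat)"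
  have bij: "bij_betw \<phi> P (Sigma P' B)"
  proof (rule bij_betw_byWitness[where f'=\<psi>])
    show "\<forall>a\<in>P. \<psi> (\<phi> a) = a"
    proof
      fix f assume "f \<in> P"
      then have "f \<in> V \<rightarrow>\<^sub>E {0..<k}" by (simp add: P_def)
      then show "\<psi> (\<phi> f) = f" using WV
        by (auto simp: \<psi>_def \<phi>_def fun_eq_iff V'_def PiE_def extensional_def)
    qed
    show "\<forall>a'\<in>Sigma P' B. \<phi> (\<psi> a') = a'"
    proof
      fix gh assume "gh \<in> Sigma P' B"
      then obtain g h where gh: "gh = (g,h)" "g \<in> V' \<rightarrow>\<^sub>E {0..<k}" "h \<in> W \<rightarrow>\<^sub>E {0..<k}"
        by (auto simp: P'_def B_def)
      then show "\<phi> (\<psi> gh) = gh" using disj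
        by (auto simp: \<psi>_def \<phi>_def fun_eq_iff PiE_def extensional_def)
    qed
    show "\<phi> ` P \<subseteq> Sigma P' B"
    proof
      fix p assume "p \<in> \<phi> ` P"
      then obtain f where f: "f \<in> P" "p = \<phi> f" by blast
      have fP: "f \<in> V \<rightarrow>\<^sub>E {0..<k}" and pr: "proper_colouring E f" using f by (auto simp: P_def)
      have "restrict f V' \<in> P'" using fP pr prop_iff by (auto simp: P'_def V'_def)
      moreover have "restrict f W \<in> B (restrict f V')" using fP pr prop_iff xV' WV
        by (auto simp: B_def)
      ultimately show "p \<in> Sigma P' B" using f by (simp add: \<phi>_def)
    qed
    show "\<psi> ` Sigma P' B \<subseteq> P"
    proof
      fix p assume "p \<in> \<psi> ` Sigma P' B"
      then obtain g h where p: "p = \<psi> (g,h)" and g: "g \<in> P'" and h: "h \<in> B g" by blast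
      have gP: "g \<in> V' \<rightarrow>\<^sub>E {0..<k}" and gpr: "proper_colouring E' g" using g by (auto simp: P'_def)
      have hP: "h \<in> W \<rightarrow>\<^sub>E {0..<k}" and hn: "\<not>(\<forall>w\<in>W. h w = g x)" using h by (auto simp: B_def)
      have pf: "p \<in> V \<rightarrow>\<^sub>E {0..<k}" using gP hP WV
        by (auto simp: p \<psi>_def V'_def PiE_def extensional_def Pi_def)
      have r: "restrict p V' = g" using gP by (auto simp: p \<psi>_def fun_eq_iff PiE_def extensional_def)
      have "\<not>(\<forall>w\<in>W. p w = p x)" using hn xV' disj by (auto simp: p \<psi>_def)
      then show "p \<in> P" using pf r gpr prop_iff by (simp add: P_def)
    qed
  qed
  have fW: "finite W" using fe by (simp add: W_def)
  have cW: "card W = card e0 - 1" using e0 fe by (simp add: W_def)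
  have fP': "finite P'" unfolding P'_def
    by (rule finite_subset[of _ "V' \<rightarrow>\<^sub>E {0..<k}"]) (auto simp: V'_def fV intro!: finite_PiE)
  have "card P = card (Sigma P' B)" using bij by (rule bij_betw_same_card)
  also have "\<dots> = (\<Sum>g\<in>P'. card (B g))"
    using fP' fW by (subst card_SigmaI) (auto simp: B_def intro!: finite_PiE)
  also have "\<dots> = (\<Sum>g\<in>P'. k ^ card W - 1)"
  proof (rule sum.cong[OF refl])
    fix g assume "g \<in> P'"
    then have "g x < k" using xV' by (auto simp: P'_def PiE_def Pi_def)
    then show "card (B g) = k ^ card W - 1" unfolding B_def by (rule card_nonconst[OF fW])
  qed
  also have "\<dots> = card P' * (k ^ card W - 1)" by simp
  finally show ?thesis by (simp add: chi_def P_def P'_def V'_def E'_def W_def[symmetric] cW)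
qed

lemma cycle_mono: "is_cycle E' vs es \<Longrightarrow> E' \<subseteq> E \<Longrightarrow> is_cycle E vs es"
  unfolding is_cycle_def is_walk_def by blast

lemma chi_empty: "finite V \<Longrightarrow> chi V {} k = k ^ card V"
  by (simp add: chi_def proper_colouring_def card_PiE)

lemma chi_forest:
  assumes "finite V" "\<forall>e\<in>E. e \<subseteq> V \<and> card e \<ge> 2" "uniform s E" "\<not>(\<exists>vs es. is_cycle E vs es)"
  shows "(V \<noteq> {} \<longrightarrow> (s-1)*card E < card V) \<and> (s-1)*card E \<le> card V \<and>
         chi V E k = k^(card V - (s-1)*card E) * (k^(s-1)-1)^card E"
  using assms
proof (induction "card V" arbitrary: V E rule: less_induct)
  case less
  note fV = less.prems(1) and hyp = less.prems(2) and uni = less.prems(3) and ac = less.prems(4)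
  show ?case
  proof (cases "E = {}")
    case True
    then show ?thesis using fV by (simp add: chi_empty card_gt_0_iff)
  next
    case False
    have fE: "finite E" using hyp fV by (meson Pow_iff finite_Pow_iff finite_subset subsetI)
    have c2: "\<forall>e\<in>E. card e \<ge> 2" using hyp by blast
    obtain e0 x where e0E: "e0 \<in> E" and xe: "x \<in> e0" and leaf: "\<forall>w\<in>e0-{x}. \<forall>f\<in>E. w \<in> f \<longrightarrow> f = e0"
      using leaf_edge[OF fE c2 ac False] by blast
    define W where "W = e0 - {x}"
    define V' where "V' = V - W"
    define E' where "E' = E - {e0}"
    have e0V: "e0 \<subseteq> V" and ce0: "card e0 \<ge> 2" using hyp e0E by auto
    have fe0: "finite e0" using ce0 by (metis card.infinite not_numeral_le_zero)
    have cs: "card e0 = s" using uni e0E by (simp add: uniform_def)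
    have cW: "card W = s - 1" using cs fe0 xe by (simp add: W_def)
    have WV: "W \<subseteq> V" using e0V by (auto simp: W_def)
    have cV': "card V' = card V - (s-1)" using WV fV cW by (simp add: V'_def card_Diff_subset finite_subset)
    have s2: "s \<ge> 2" using cs ce0 by simp
    have ltV: "card V' < card V"
    proof -
      have "card W \<le> card V" using WV fV by (simp add: card_mono)
      then show ?thesis using cV' cW s2 by simp
    qed
    have cVV: "card V = card V' + (s-1)"
    proof -
      have "card W \<le> card V" using WV fV by (simp add: card_mono)
      then show ?thesis using cV' cW by simp
    qed
    have oth: "\<forall>e\<in>E - {e0}. e \<subseteq> V - (e0 - {x})"
    proof
      fix e assume e: "e \<in> E - {e0}"
      have "e \<subseteq> V" using hyp e by auto
      moreover have "e \<inter> (e0 - {x}) = {}" using leaf e by blast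
      ultimately show "e \<subseteq> V - (e0 - {x})" by blast
    qed
    have fV': "finite V'" using fV by (simp add: V'_def)
    have hyp': "\<forall>e\<in>E'. e \<subseteq> V' \<and> card e \<ge> 2" using oth hyp by (auto simp: E'_def V'_def W_def)
    have uni': "uniform s E'" using uni by (auto simp: uniform_def E'_def)
    have ac': "\<not>(\<exists>vs es. is_cycle E' vs es)" using ac cycle_mono[of E' _ _ E] by (auto simp: E'_def)
    have IH: "(V' \<noteq> {} \<longrightarrow> (s-1)*card E' < card V') \<and> (s-1)*card E' \<le> card V' \<and>
         chi V' E' k = k^(card V' - (s-1)*card E') * (k^(s-1)-1)^card E'"
      using less.hyps[OF ltV fV' hyp' uni' ac'] .
    have xV': "x \<in> V'" using xe e0V by (auto simp: V'_def W_def)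
    have cE': "card E' = card E - 1" using e0E fE by (simp add: E'_def)
    have mpos: "card E \<ge> 1" using e0E fE by (metis One_nat_def Suc_leI card_gt_0_iff empty_iff)
    have lt: "(s-1)*card E' < card V'" using IH xV' by blast
    have ineq: "(s-1)*card E < card V"
    proof -
      have "card E = card E' + 1" using cE' mpos by simp
      then have "(s-1)*card E = (s-1)*card E' + (s-1)" by simp
      moreover note cVV
      ultimately show ?thesis using lt by simp
    qed
    have expo: "card V - (s-1)*card E = card V' - (s-1)*card E'"
    proof -
      have "card E = card E' + 1" using cE' mpos by simp
      then have "(s-1)*card E = (s-1)*card E' + (s-1)" by simp
      moreover note cVV
      ultimately show ?thesis by simp
    qed
    have "chi V E k = chi V' E' k * (k^(card e0 - 1) - 1)"
      using chi_leaf[OF fV e0E xe e0V oth fe0] by (simp add: V'_def E'_def W_def)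
    also have "\<dots> = k^(card V - (s-1)*card E) * (k^(s-1)-1)^card E"
      using IH expo cs cE' mpos by (simp add: power_Suc2[symmetric] del: power_Suc2)
    finally show ?thesis using ineq by simp
  qed
qed

definition Gk :: "'a set \<Rightarrow> 'a set set \<Rightarrow> nat \<Rightarrow> nat" where
  "Gk V E k = card {f \<in> V \<rightarrow>\<^sub>E {0..k}. proper_colouring E f \<and> card {v\<in>V. f v = k} = 1}"

lemma nonmono_cong: "\<forall>u\<in>e. p u = f u \<Longrightarrow> \<not>(\<exists>c. \<forall>u\<in>e. f u = c) \<Longrightarrow> \<not>(\<exists>c. \<forall>u\<in>e. p u = c)"
  by auto

lemma nonmono_two: "u \<in> e \<Longrightarrow> v \<in> e \<Longrightarrow> p u \<noteq> p v \<Longrightarrow> \<not>(\<exists>c. \<forall>u\<in>e. p u = c)"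
  by metis

lemma G_piece:
  assumes fV: "finite V" and hyp: "\<forall>e\<in>E. e \<subseteq> V \<and> card e \<ge> 2" and v: "v \<in> V"
  shows "card {f \<in> V \<rightarrow>\<^sub>E {0..k}. proper_colouring E f \<and> (\<forall>u\<in>V. f u = k \<longleftrightarrow> u = v)}
         = chi (V - {v}) {e\<in>E. v \<notin> e} k"
proof -
  define T where "T = {f \<in> V \<rightarrow>\<^sub>E {0..k}. proper_colouring E f \<and> (\<forall>u\<in>V. f u = k \<longleftrightarrow> u = v)}"
  define P where "P = {g \<in> (V - {v}) \<rightarrow>\<^sub>E {0..<k}. proper_colouring {e\<in>E. v \<notin> e} g}"
  have "bij_betw (\<lambda>f. restrict f (V - {v})) T P"
  proof (rule bij_betw_byWitness[where f'="\<lambda>g. g(v := k)"])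
    show "\<forall>f\<in>T. (restrict f (V - {v}))(v := k) = f"
    proof
      fix f assume f: "f \<in> T"
      then have "f v = k" using v by (simp add: T_def)
      then show "(restrict f (V - {v}))(v := k) = f" using f
        by (auto simp: T_def fun_eq_iff PiE_def extensional_def)
    qed
    show "\<forall>g\<in>P. restrict (g(v := k)) (V - {v}) = g"
      by (auto simp: P_def fun_eq_iff PiE_def extensional_def)
    show "(\<lambda>f. restrict f (V - {v})) ` T \<subseteq> P"
    proof
      fix p assume "p \<in> (\<lambda>f. restrict f (V - {v})) ` T"
      then obtain f where f: "f \<in> T" "p = restrict f (V - {v})" by blast
      have fP: "f \<in> V \<rightarrow>\<^sub>E {0..k}" and pr: "proper_colouring E f" and kk: "\<forall>u\<in>V. f u = k \<longleftrightarrow> u = v"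
        using f by (auto simp: T_def)
      have "p \<in> (V - {v}) \<rightarrow>\<^sub>E {0..<k}"
      proof -
        have "\<And>u. u \<in> V - {v} \<Longrightarrow> f u < k"
        proof -
          fix u assume u: "u \<in> V - {v}"
          then have "f u \<le> k" using fP by auto
          moreover have "f u \<noteq> k" using kk u by simp
          ultimately show "f u < k" by simp
        qed
        then show ?thesis using f(2) by auto
      qed
      moreover have "proper_colouring {e\<in>E. v \<notin> e} p"
        unfolding proper_colouring_def
      proof
        fix e assume e: "e \<in> {e\<in>E. v \<notin> e}"
        then have "e \<subseteq> V - {v}" using hyp by auto
        moreover have "\<not>(\<exists>c. \<forall>u\<in>e. f u = c)" using pr e by (auto simp: proper_colouring_def)
        moreover have "\<forall>u\<in>e. p u = f u" using \<open>e \<subseteq> V - {v}\<close> f(2) by auto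
        ultimately show "\<not>(\<exists>c. \<forall>u\<in>e. p u = c)" using nonmono_cong by blast
      qed
      ultimately show "p \<in> P" by (simp add: P_def)
    qed
    show "(\<lambda>g. g(v := k)) ` P \<subseteq> T"
    proof
      fix p assume "p \<in> (\<lambda>g. g(v := k)) ` P"
      then obtain g where g: "g \<in> P" "p = g(v := k)" by blast
      have gP: "g \<in> (V - {v}) \<rightarrow>\<^sub>E {0..<k}" and pr: "proper_colouring {e\<in>E. v \<notin> e} g"
        using g by (auto simp: P_def)
      have "p \<in> V \<rightarrow>\<^sub>E {0..k}"
        unfolding PiE_iff
      proof (intro conjI ballI)
        fix x assume x: "x \<in> V"
        show "p x \<in> {0..k}"
        proof (cases "x = v")
          case True then show ?thesis using g(2) by simp
        next
          case False
          then have "g x \<in> {0..<k}" using gP x by (simp add: PiE_iff)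
          then show ?thesis using g(2) False by simp
        qed
      next
        show "p \<in> extensional V"
        unfolding extensional_def
        proof (intro CollectI allI impI)
          fix x assume x: "x \<notin> V"
          then have "x \<noteq> v" using v by blast
          moreover have "g x = undefined" using gP x by (meson DiffD1 PiE_E extensional_arb)
          ultimately show "p x = undefined" using g(2) by simp
        qed
      qed
      moreover have "\<forall>u\<in>V. p u = k \<longleftrightarrow> u = v"
      proof
        fix u assume u: "u \<in> V"
        show "p u = k \<longleftrightarrow> u = v"
        proof (cases "u = v")
          case True then show ?thesis using g(2) by simp
        next
          case False
          then have "g u \<in> {0..<k}" using gP u by (simp add: PiE_iff)
          then show ?thesis using g(2) False by simp
        qed
      qed
      moreover have "proper_colouring E p"
        unfolding proper_colouring_def
      proof
        fix e assume e: "e \<in> E"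
        show "\<not>(\<exists>c. \<forall>u\<in>e. p u = c)"
        proof (cases "v \<in> e")
          case True
          have ce: "card e \<ge> 2" using hyp e by blast
          obtain u where u: "u \<in> e" "u \<noteq> v" using other_elem[OF ce True] by blast
          have "e \<subseteq> V" using hyp e by blast
          then have "u \<in> V - {v}" using u by blast
          then have "g u \<in> {0..<k}" using gP by (simp add: PiE_iff)
          then have "p u < k" using g(2) u by simp
          moreover have "p v = k" using g(2) by simp
          ultimately show ?thesis using nonmono_two[of u e v p] u True by simp
        next
          case False
          then have "e \<subseteq> V - {v}" using hyp e by auto
          moreover have "\<not>(\<exists>c. \<forall>u\<in>e. g u = c)" using pr e False by (auto simp: proper_colouring_def)
          moreover have "\<forall>u\<in>e. p u = g u" using \<open>e \<subseteq> V - {v}\<close> g(2) by auto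
          ultimately show ?thesis using nonmono_cong by blast
        qed
      qed
      ultimately show "p \<in> T" by (simp add: T_def)
    qed
  qed
  then show ?thesis by (simp add: bij_betw_same_card T_def P_def chi_def)
qed

lemma G_decomp:
  assumes fV: "finite V" and hyp: "\<forall>e\<in>E. e \<subseteq> V \<and> card e \<ge> 2"
  shows "Gk V E k = (\<Sum>v\<in>V. chi (V - {v}) {e\<in>E. v \<notin> e} k)"
proof -
  define T where "T v = {f \<in> V \<rightarrow>\<^sub>E {0..k}. proper_colouring E f \<and> (\<forall>u\<in>V. f u = k \<longleftrightarrow> u = v)}" for v
  have eq: "{f \<in> V \<rightarrow>\<^sub>E {0..k}. proper_colouring E f \<and> card {v\<in>V. f v = k} = 1} = \<Union>(T ` V)"
  proof (intro set_eqI iffI)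
    fix f assume "f \<in> {f \<in> V \<rightarrow>\<^sub>E {0..k}. proper_colouring E f \<and> card {v\<in>V. f v = k} = 1}"
    then have f: "f \<in> V \<rightarrow>\<^sub>E {0..k}" "proper_colouring E f" "card {v\<in>V. f v = k} = 1" by auto
    then obtain v where v: "{u\<in>V. f u = k} = {v}" using card_1_singletonE[OF f(3)] by blast
    then have vV: "v \<in> V" by blast
    have "\<forall>u\<in>V. f u = k \<longleftrightarrow> u = v"
    proof
      fix u assume "u \<in> V"
      then show "f u = k \<longleftrightarrow> u = v" using v by (metis (mono_tags, lifting) mem_Collect_eq singletonD singletonI)
    qed
    then show "f \<in> \<Union>(T ` V)" using f vV unfolding T_def by blast
  next
    fix f assume "f \<in> \<Union>(T ` V)"
    then obtain v where v: "v \<in> V" "f \<in> T v" by blast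
    then have "{u\<in>V. f u = k} = {v}" by (auto simp: T_def)
    then show "f \<in> {f \<in> V \<rightarrow>\<^sub>E {0..k}. proper_colouring E f \<and> card {v\<in>V. f v = k} = 1}"
      using v by (simp add: T_def)
  qed
  have fin: "\<forall>v\<in>V. finite (T v)"
  proof
    fix v show "finite (T v)" unfolding T_def
      by (rule finite_subset[of _ "V \<rightarrow>\<^sub>E {0..k}"]) (auto simp: fV intro!: finite_PiE)
  qed
  have dis: "\<forall>i\<in>V. \<forall>j\<in>V. i \<noteq> j \<longrightarrow> T i \<inter> T j = {}"
  proof (intro ballI impI)
    fix i j assume ij: "i \<in> V" "j \<in> V" "i \<noteq> j"
    show "T i \<inter> T j = {}"
    proof (rule ccontr)
      assume "T i \<inter> T j \<noteq> {}"
      then obtain f where "f \<in> T i" "f \<in> T j" by blast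
      then have A: "\<forall>u\<in>V. f u = k \<longleftrightarrow> u = i" "\<forall>u\<in>V. f u = k \<longleftrightarrow> u = j"
        unfolding T_def by blast+
      then show False using ij by metis
    qed
  qed
  have "Gk V E k = (\<Sum>v\<in>V. card (T v))"
    unfolding Gk_def eq using card_UN_disjoint[OF fV fin dis] .
  also have "\<dots> = (\<Sum>v\<in>V. chi (V - {v}) {e\<in>E. v \<notin> e} k)"
    using G_piece[OF fV hyp] by (simp add: T_def)
  finally show ?thesis .
qed

definition cls :: "'a set \<Rightarrow> ('a \<Rightarrow> nat) \<Rightarrow> nat \<Rightarrow> nat" where
  "cls V f = (\<lambda>i. card {v\<in>V. f v = i})"

lemma csf_alt: "csf V E \<alpha> = card {f \<in> V \<rightarrow>\<^sub>E (UNIV :: nat set). proper_colouring E f \<and> cls V f = \<alpha>}"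
  unfolding csf_def cls_def by (simp add: fun_eq_iff)

lemma fib_eq:
  assumes "P \<alpha>"
  shows "{f \<in> {f \<in> V \<rightarrow>\<^sub>E (UNIV :: nat set). proper_colouring E f \<and> P (cls V f)}. cls V f = \<alpha>}
       = {f \<in> V \<rightarrow>\<^sub>E (UNIV :: nat set). proper_colouring E f \<and> cls V f = \<alpha>}"
  using assms by blast

lemma csf_sum:
  assumes fin: "finite {f \<in> V \<rightarrow>\<^sub>E (UNIV :: nat set). proper_colouring E f \<and> P (cls V f)}"
  shows "card {f \<in> V \<rightarrow>\<^sub>E (UNIV :: nat set). proper_colouring E f \<and> P (cls V f)}
         = (\<Sum>\<alpha>\<in>{\<alpha>. P \<alpha> \<and> csf V E \<alpha> \<noteq> 0}. csf V E \<alpha>)"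
proof -
  define F where "F = {f \<in> V \<rightarrow>\<^sub>E (UNIV :: nat set). proper_colouring E f \<and> P (cls V f)}"
  have fF: "finite F" using fin by (simp add: F_def)
  have fib: "P \<alpha> \<Longrightarrow> csf V E \<alpha> = card {f \<in> F. cls V f = \<alpha>}" for \<alpha>
    unfolding csf_alt F_def using fib_eq[of P \<alpha> V E] by simp
  have img: "cls V ` F = {\<alpha>. P \<alpha> \<and> csf V E \<alpha> \<noteq> 0}"
  proof (intro set_eqI iffI)
    fix \<alpha> assume "\<alpha> \<in> cls V ` F"
    then obtain f where f: "f \<in> F" "\<alpha> = cls V f" by blast
    then have P: "P \<alpha>" by (simp add: F_def)
    have "f \<in> {f \<in> F. cls V f = \<alpha>}" using f by blast
    moreover have "finite {f \<in> F. cls V f = \<alpha>}" using fF by simp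
    ultimately have "card {f \<in> F. cls V f = \<alpha>} \<noteq> 0" by (metis card_0_eq empty_iff)
    then show "\<alpha> \<in> {\<alpha>. P \<alpha> \<and> csf V E \<alpha> \<noteq> 0}" using P fib[OF P] by simp
  next
    fix \<alpha> assume a: "\<alpha> \<in> {\<alpha>. P \<alpha> \<and> csf V E \<alpha> \<noteq> 0}"
    then have P: "P \<alpha>" by simp
    then have "card {f \<in> F. cls V f = \<alpha>} \<noteq> 0" using a fib[OF P] by simp
    then have "{f \<in> F. cls V f = \<alpha>} \<noteq> {}" by (metis card.empty)
    then obtain f where "f \<in> F" "cls V f = \<alpha>" by blast
    then show "\<alpha> \<in> cls V ` F" by blast
  qed
  have "card F = (\<Sum>\<alpha>\<in>cls V ` F. card {f \<in> F. cls V f = \<alpha>})"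
  proof -
    have "card F = (\<Sum>x\<in>F. 1::nat)" by (rule card_eq_sum)
    also have "\<dots> = (\<Sum>\<alpha>\<in>cls V ` F. (\<Sum>x\<in>{f \<in> F. cls V f = \<alpha>}. 1::nat))"
      by (rule sum.image_gen[OF fF])
    also have "\<dots> = (\<Sum>\<alpha>\<in>cls V ` F. card {f \<in> F. cls V f = \<alpha>})" by simp
    finally show ?thesis .
  qed
  also have "\<dots> = (\<Sum>\<alpha>\<in>cls V ` F. csf V E \<alpha>)"
  proof (rule sum.cong[OF refl])
    fix \<alpha> assume "\<alpha> \<in> cls V ` F"
    then have "P \<alpha>" by (auto simp: F_def)
    then show "card {f \<in> F. cls V f = \<alpha>} = csf V E \<alpha>" using fib by simp
  qed
  also have "\<dots> = (\<Sum>\<alpha>\<in>{\<alpha>. P \<alpha> \<and> csf V E \<alpha> \<noteq> 0}. csf V E \<alpha>)" by (simp only: img)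
  finally show ?thesis unfolding F_def .
qed

lemma cls_zero: "finite V \<Longrightarrow> cls V f i = 0 \<longleftrightarrow> (\<forall>v\<in>V. f v \<noteq> i)"
  by (auto simp: cls_def)

lemma chi_csf:
  assumes fV: "finite V"
  shows "chi V E k = (\<Sum>\<alpha>\<in>{\<alpha>. (\<forall>i\<ge>k. \<alpha> i = 0) \<and> csf V E \<alpha> \<noteq> 0}. csf V E \<alpha>)"
proof -
  have eq: "{f \<in> V \<rightarrow>\<^sub>E {0..<k}. proper_colouring E f}
      = {f \<in> V \<rightarrow>\<^sub>E (UNIV :: nat set). proper_colouring E f \<and> (\<lambda>\<alpha>. \<forall>i\<ge>k. \<alpha> i = 0) (cls V f)}"
  proof (intro set_eqI iffI)
    fix f assume f: "f \<in> {f \<in> V \<rightarrow>\<^sub>E {0..<k}. proper_colouring E f}"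
    then have "\<forall>i\<ge>k. cls V f i = 0" using fV by (auto simp: cls_zero PiE_iff)
    then show "f \<in> {f \<in> V \<rightarrow>\<^sub>E (UNIV :: nat set). proper_colouring E f \<and> (\<lambda>\<alpha>. \<forall>i\<ge>k. \<alpha> i = 0) (cls V f)}"
      using f by (auto simp: PiE_iff)
  next
    fix f assume f: "f \<in> {f \<in> V \<rightarrow>\<^sub>E (UNIV :: nat set). proper_colouring E f \<and> (\<lambda>\<alpha>. \<forall>i\<ge>k. \<alpha> i = 0) (cls V f)}"
    then have "\<forall>v\<in>V. f v < k" using fV cls_zero by (metis (mono_tags, lifting) mem_Collect_eq not_le)
    then show "f \<in> {f \<in> V \<rightarrow>\<^sub>E {0..<k}. proper_colouring E f}" using f by (auto simp: PiE_iff)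
  qed
  have fin: "finite {f \<in> V \<rightarrow>\<^sub>E {0..<k}. proper_colouring E f}"
    by (rule finite_subset[of _ "V \<rightarrow>\<^sub>E {0..<k}"]) (auto simp: fV intro!: finite_PiE)
  show ?thesis unfolding chi_def eq using csf_sum[of V E "\<lambda>\<alpha>. \<forall>i\<ge>k. \<alpha> i = 0"] fin eq by simp
qed

lemma Gk_csf:
  assumes fV: "finite V"
  shows "Gk V E k = (\<Sum>\<alpha>\<in>{\<alpha>. ((\<forall>i>k. \<alpha> i = 0) \<and> \<alpha> k = 1) \<and> csf V E \<alpha> \<noteq> 0}. csf V E \<alpha>)"
proof -
  have eq: "{f \<in> V \<rightarrow>\<^sub>E {0..k}. proper_colouring E f \<and> card {v\<in>V. f v = k} = 1}
      = {f \<in> V \<rightarrow>\<^sub>E (UNIV :: nat set). proper_colouring E f \<and> (\<lambda>\<alpha>. (\<forall>i>k. \<alpha> i = 0) \<and> \<alpha> k = 1) (cls V f)}"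
  proof (intro set_eqI iffI)
    fix f assume f: "f \<in> {f \<in> V \<rightarrow>\<^sub>E {0..k}. proper_colouring E f \<and> card {v\<in>V. f v = k} = 1}"
    then have fP: "f \<in> V \<rightarrow>\<^sub>E {0..k}" and pr: "proper_colouring E f" and c1: "card {v\<in>V. f v = k} = 1"
      by simp_all
    have le: "\<forall>v\<in>V. f v \<le> k" using fP by (simp add: PiE_iff)
    have "\<forall>i>k. cls V f i = 0"
    proof (intro allI impI)
      fix i assume "k < i"
      then have "\<forall>v\<in>V. f v \<noteq> i" using le by (metis not_le)
      then show "cls V f i = 0" using cls_zero[OF fV] by blast
    qed
    moreover have "cls V f k = 1" using c1 by (simp add: cls_def)
    moreover have "f \<in> V \<rightarrow>\<^sub>E (UNIV :: nat set)" using fP by (simp add: PiE_iff)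
    ultimately show "f \<in> {f \<in> V \<rightarrow>\<^sub>E (UNIV :: nat set). proper_colouring E f \<and> (\<lambda>\<alpha>. (\<forall>i>k. \<alpha> i = 0) \<and> \<alpha> k = 1) (cls V f)}"
      using pr by simp
  next
    fix f assume f: "f \<in> {f \<in> V \<rightarrow>\<^sub>E (UNIV :: nat set). proper_colouring E f \<and> (\<lambda>\<alpha>. (\<forall>i>k. \<alpha> i = 0) \<and> \<alpha> k = 1) (cls V f)}"
    then have fP: "f \<in> V \<rightarrow>\<^sub>E (UNIV :: nat set)" and pr: "proper_colouring E f"
      and z: "\<forall>i>k. cls V f i = 0" and o: "cls V f k = 1" by simp_all
    have le: "\<forall>v\<in>V. f v \<le> k"
    proof
      fix v assume v: "v \<in> V"
      show "f v \<le> k"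
      proof (rule ccontr)
        assume "\<not> f v \<le> k"
        then have "cls V f (f v) = 0" using z by simp
        then show False using v cls_zero[OF fV] by blast
      qed
    qed
    have "f \<in> V \<rightarrow>\<^sub>E {0..k}" using fP le by (simp add: PiE_iff)
    moreover have "card {v\<in>V. f v = k} = 1" using o by (simp add: cls_def)
    ultimately show "f \<in> {f \<in> V \<rightarrow>\<^sub>E {0..k}. proper_colouring E f \<and> card {v\<in>V. f v = k} = 1}"
      using pr by simp
  qed
  have fin: "finite {f \<in> V \<rightarrow>\<^sub>E {0..k}. proper_colouring E f \<and> card {v\<in>V. f v = k} = 1}"
    by (rule finite_subset[of _ "V \<rightarrow>\<^sub>E {0..k}"]) (auto simp: fV intro!: finite_PiE)
  have "Gk V E k = card {f \<in> V \<rightarrow>\<^sub>E (UNIV :: nat set). proper_colouring E f \<and> (\<lambda>\<alpha>. (\<forall>i>k. \<alpha> i = 0) \<and> \<alpha> k = 1) (cls V f)}"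
    unfolding Gk_def eq ..
  also have "\<dots> = (\<Sum>\<alpha>\<in>{\<alpha>. ((\<forall>i>k. \<alpha> i = 0) \<and> \<alpha> k = 1) \<and> csf V E \<alpha> \<noteq> 0}. csf V E \<alpha>)"
    by (rule csf_sum) (use fin eq in simp)
  finally show ?thesis .
qed

lemma poly_eq_inf:
  fixes p q :: "real poly"
  assumes "infinite Y" "\<forall>y\<in>Y. poly p y = poly q y"
  shows "p = q"
proof (rule ccontr)
  assume "p \<noteq> q"
  then have "p - q \<noteq> 0" by simp
  then have "finite {x. poly (p - q) x = 0}" by (rule poly_roots_finite)
  moreover have "Y \<subseteq> {x. poly (p - q) x = 0}" using assms(2) by auto
  ultimately show False using assms(1) finite_subset by blast
qed

lemma inf_nat_reals: "infinite (real ` {n::nat. n \<ge> 1})"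
proof -
  have "infinite {n::nat. n \<ge> 1}" unfolding infinite_nat_iff_unbounded_le
  proof
    fix m :: nat show "\<exists>n\<ge>m. n \<in> {n. n \<ge> 1}" by (rule exI[of _ "Suc m"]) simp
  qed
  then show ?thesis by (simp add: finite_image_iff inj_on_def)
qed

definition qpol :: "nat \<Rightarrow> real poly" where "qpol a = monom 1 a - 1"

lemma poly_qpol: "poly (qpol a) x = x ^ a - 1"
  by (simp add: qpol_def poly_monom)

lemma qpol_factor: "qpol a = [:-1,1:] * (\<Sum>i<a. monom 1 i)"
proof -
  have "poly (qpol a) = poly ([:-1,1:] * (\<Sum>i<a. monom 1 i))"
  proof
    fix x :: real
    show "poly (qpol a) x = poly ([:-1,1:] * (\<Sum>i<a. monom 1 i)) x"
    proof -
      have "x^a - 1 = (x-1)*(\<Sum>i<a. x^i)" by (rule power_diff_1_eq)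
      then show ?thesis by (simp add: poly_qpol poly_sum poly_monom left_diff_distrib)
    qed
  qed
  then show ?thesis by (simp add: poly_eq_poly_eq_iff)
qed

lemma order_pow: "q \<noteq> 0 \<Longrightarrow> order x (q ^ m) = m * order x q"
proof (induction m)
  case 0 then show ?case by simp
next
  case (Suc m)
  have "q * q ^ m \<noteq> 0" using Suc.prems by simp
  then show ?case using Suc by (simp add: Polynomial.order_mult)
qed

lemma qpol_nz: assumes "a \<ge> 1" shows "qpol a \<noteq> 0"
proof
  assume "qpol a = 0"
  then have "poly (qpol a) 0 = 0" by simp
  then show False using assms by (simp add: poly_qpol power_0_left)
qed

lemma order1_qpol: assumes "a \<ge> 1" shows "order 1 (qpol a) = 1"
proof -
  define r where "r = (\<Sum>i<a. monom (1::real) i)"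
  have pr: "poly r 1 = real a" by (simp add: r_def poly_sum poly_monom)
  have rnz: "r \<noteq> 0" using pr assms by auto
  have "order 1 (qpol a) = order 1 [:-1,1::real:] + order 1 r"
  proof -
    have nz: "[:-1,1::real:] * r \<noteq> 0" using rnz by (simp only: mult_eq_0_iff) simp
    show ?thesis unfolding qpol_factor r_def[symmetric] by (rule Polynomial.order_mult[OF nz])
  qed
  moreover have "order 1 [:-1,(1::real):] = 1" using order_power_n_n[of 1 1] by simp
  moreover have "order 1 r = 0" using pr assms by (intro order_0I) simp
  ultimately show ?thesis by simp
qed

definition chipol :: "nat \<Rightarrow> nat \<Rightarrow> nat \<Rightarrow> real poly" where
  "chipol c a m = [:0,1:]^c * (qpol a)^m"

lemma chipol_nz: "a \<ge> 1 \<Longrightarrow> chipol c a m \<noteq> 0"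
  by (simp add: chipol_def qpol_nz)

lemma order0_chipol: "a \<ge> 1 \<Longrightarrow> order 0 (chipol c a m) = c"
proof -
  assume a: "a \<ge> 1"
  have "order 0 (chipol c a m) = order 0 ([:0,1::real:]^c) + order 0 ((qpol a)^m)"
    unfolding chipol_def by (rule Polynomial.order_mult) (use chipol_nz[OF a] in \<open>simp add: chipol_def\<close>)
  moreover have "order 0 ([:0,(1::real):]^c) = c" using order_power_n_n[of 0 c] by simp
  moreover have "order 0 ((qpol a)^m) = 0"
    by (rule order_0I) (use a in \<open>simp add: poly_qpol power_0_left\<close>)
  ultimately show ?thesis by simp
qed

lemma order1_chipol: "a \<ge> 1 \<Longrightarrow> order 1 (chipol c a m) = m"
proof -
  assume a: "a \<ge> 1"
  have "order 1 (chipol c a m) = order 1 ([:0,1::real:]^c) + order 1 ((qpol a)^m)"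
    unfolding chipol_def by (rule Polynomial.order_mult) (use chipol_nz[OF a] in \<open>simp add: chipol_def\<close>)
  moreover have "order 1 ([:0,(1::real):]^c) = 0" by (rule order_0I) simp
  moreover have "order 1 ((qpol a)^m) = m" using order_pow[OF qpol_nz[OF a]] order1_qpol[OF a] by simp
  ultimately show ?thesis by simp
qed

lemma poly_chipol_nat:
  assumes "k \<ge> 1"
  shows "poly (chipol c a m) (real k) = real (k^c * (k^a - 1)^m)"
proof -
  have "k^a \<ge> 1" using assms by simp
  then have "real (k^a - 1) = real k ^ a - 1" by (simp add: of_nat_diff)
  then show ?thesis by (simp add: chipol_def poly_qpol)
qed

lemma params_eq:
  fixes c m a c' m' b :: nat
  assumes a: "a \<ge> 1" and b: "b \<ge> 1"
    and eq: "\<forall>k::nat\<ge>1. k^c * (k^a-1)^m = k^c' * (k^b - 1)^m'"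
  shows "c = c' \<and> m = m' \<and> (m \<ge> 1 \<longrightarrow> a = b)"
proof -
  have "chipol c a m = chipol c' b m'"
  proof (rule poly_eq_inf[OF inf_nat_reals])
    show "\<forall>y\<in>real ` {n. 1 \<le> n}. poly (chipol c a m) y = poly (chipol c' b m') y"
    proof
      fix y assume "y \<in> real ` {n. 1 \<le> n}"
      then obtain n where n: "n \<ge> 1" "y = real n" by blast
      have "poly (chipol c a m) y = real (n^c * (n^a - 1)^m)" using poly_chipol_nat[OF n(1)] n(2) by simp
      also have "\<dots> = real (n^c' * (n^b - 1)^m')"
      proof -
        have "n^c * (n^a - 1)^m = n^c' * (n^b - 1)^m'" using eq[rule_format, OF n(1)] .
        then show ?thesis by simp
      qed
      also have "\<dots> = poly (chipol c' b m') y" using poly_chipol_nat[OF n(1)] n(2) by simp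
      finally show "poly (chipol c a m) y = poly (chipol c' b m') y" .
    qed
  qed
  note P = this
  have cc: "c = c'"
  proof -
    have "c = order 0 (chipol c a m)" by (simp add: order0_chipol[OF a])
    also have "\<dots> = order 0 (chipol c' b m')" by (simp only: P)
    also have "\<dots> = c'" by (simp add: order0_chipol[OF b])
    finally show ?thesis .
  qed
  have mm: "m = m'"
  proof -
    have "m = order 1 (chipol c a m)" by (simp add: order1_chipol[OF a])
    also have "\<dots> = order 1 (chipol c' b m')" by (simp only: P)
    also have "\<dots> = m'" by (simp add: order1_chipol[OF b])
    finally show ?thesis .
  qed
  have "m \<ge> 1 \<longrightarrow> a = b"
  proof
    assume m1: "m \<ge> 1"
    have "(2::nat)^c * (2^a-1)^m = 2^c' * (2^b - 1)^m'" using eq by simp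
    then have "(2::nat)^c * (2^a-1)^m = 2^c * (2^b - 1)^m" using cc mm by simp
    then have "(2^a-1)^m = ((2::nat)^b - 1)^m" by simp
    then have "(2::nat)^a-1 = 2^b - 1" by (rule power_eq_imp_eq_base) (use m1 in auto)
    moreover have "(1::nat) \<le> 2^a" "(1::nat) \<le> 2^b" by simp_all
    ultimately have "(2::nat)^a = 2^b" by linarith
    then show "a = b" by simp
  qed
  then show ?thesis using cc mm by simp
qed

lemma degrees_from_sums:
  fixes d :: "'a \<Rightarrow> nat" and d' :: "'b \<Rightarrow> nat"
  assumes fV: "finite V" and fV': "finite V'" and "infinite Y" "\<forall>y\<in>Y. (\<Sum>v\<in>V. y ^ d v) = (\<Sum>w\<in>V'. (y::real) ^ d' w)"
  shows "card {v\<in>V. d v = j} = card {w\<in>V'. d' w = j}"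
proof -
  define R where "R = (\<Sum>v\<in>V. monom (1::real) (d v))"
  define R' where "R' = (\<Sum>w\<in>V'. monom (1::real) (d' w))"
  have "R = R'"
    by (rule poly_eq_inf[OF assms(3)]) (use assms(4) in \<open>simp add: R_def R'_def poly_sum poly_monom\<close>)
  moreover have "coeff R j = real (card {v\<in>V. d v = j})"
    by (simp add: R_def coeff_sum coeff_monom sum.inter_filter[OF fV, symmetric])
  moreover have "coeff R' j = real (card {w\<in>V'. d' w = j})"
    by (simp add: R'_def coeff_sum coeff_monom sum.inter_filter[OF fV', symmetric])
  ultimately show ?thesis by simp
qed

lemma count_deg: "finite V \<Longrightarrow> count (image_mset f (mset_set V)) j = card {v\<in>V. f v = j}"
proof -
  assume fV: "finite V"
  have "count (image_mset f (mset_set V)) j = (\<Sum>y\<in>f -` {j} \<inter> V. count (mset_set V) y)"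
    using count_image_mset[of f "mset_set V" j] fV by simp
  also have "\<dots> = (\<Sum>y\<in>f -` {j} \<inter> V. 1)" by (rule sum.cong) (auto simp: fV count_mset_set)
  also have "\<dots> = card (f -` {j} \<inter> V)" by simp
  also have "f -` {j} \<inter> V = {v\<in>V. f v = j}" by auto
  finally show ?thesis .
qed

lemma hypertree_facts:
  assumes "hypertree V E"
  shows "finite V" "\<forall>e\<in>E. e \<subseteq> V \<and> card e \<ge> 2" "\<not>(\<exists>vs es. is_cycle E vs es)"
  using assms by (auto simp: hypertree_def hypergraph_def)

lemma chi_v_formula:
  assumes fV: "finite V" and hyp: "\<forall>e\<in>E. e \<subseteq> V \<and> card e \<ge> 2" and uni: "uniform s E"
    and ac: "\<not>(\<exists>vs es. is_cycle E vs es)" and v: "v \<in> V"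
    and n: "card V = c + (s-1) * card E" and c1: "c \<ge> 1"
  shows "chi (V - {v}) {e\<in>E. v \<notin> e} k
       = k^(c - 1 + (s-1)*Defs.degree E v) * (k^(s-1)-1)^(card E - Defs.degree E v)"
proof -
  have fE: "finite E" using hyp fV by (meson Pow_iff finite_Pow_iff finite_subset subsetI)
  have fV': "finite (V - {v})" using fV by simp
  have hyp': "\<forall>e\<in>{e\<in>E. v \<notin> e}. e \<subseteq> V - {v} \<and> card e \<ge> 2" using hyp by auto
  have uni': "uniform s {e\<in>E. v \<notin> e}" using uni by (auto simp: uniform_def)
  have ac': "\<not>(\<exists>vs es. is_cycle {e\<in>E. v \<notin> e} vs es)" using ac cycle_mono[of "{e\<in>E. v \<notin> e}" _ _ E] by blast
  have cE: "card {e\<in>E. v \<notin> e} = card E - Defs.degree E v"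
  proof -
    have "{e\<in>E. v \<notin> e} = E - {e\<in>E. v \<in> e}" by blast
    then show ?thesis using fE by (simp add: card_Diff_subset Defs.degree_def)
  qed
  have dle: "Defs.degree E v \<le> card E" unfolding Defs.degree_def using fE by (simp add: card_mono)
  have cV: "card (V - {v}) = card V - 1" using v fV by simp
  have F: "chi (V - {v}) {e\<in>E. v \<notin> e} k
     = k^(card (V - {v}) - (s-1)*card {e\<in>E. v \<notin> e}) * (k^(s-1)-1)^card {e\<in>E. v \<notin> e}"
    using chi_forest[OF fV' hyp' uni' ac'] by blast
  have "card (V - {v}) - (s-1)*card {e\<in>E. v \<notin> e} = c - 1 + (s-1)*Defs.degree E v"
  proof -
    have "(s-1)*(card E - Defs.degree E v) = (s-1)*card E - (s-1)*Defs.degree E v" by (simp add: diff_mult_distrib2)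
    moreover have "(s-1)*Defs.degree E v \<le> (s-1)*card E" using dle by simp
    ultimately show ?thesis using cV cE n c1 by simp
  qed
  then show ?thesis using F cE by simp
qed

lemma term_real:
  fixes k a c d m :: nat
  assumes k: "k \<ge> 2" and a: "a \<ge> 1" and dm: "d \<le> m"
  shows "real (k^(c - 1 + a*d) * (k^a-1)^(m - d))
       = real k^(c-1) * (real k^a - 1)^m * (real k^a / (real k^a - 1))^d"
proof -
  define x where "x = real k^a"
  have x1: "x > 1" using k a unfolding x_def by (simp add: one_less_power)
  have "real (k^a - 1) = x - 1" unfolding x_def using k by (simp add: of_nat_diff)
  then have "real (k^(c - 1 + a*d) * (k^a-1)^(m - d)) = real k^(c-1) * x^d * (x-1)^(m-d)"
    by (simp add: x_def power_add power_mult)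
  also have "(x-1)^(m-d) = (x-1)^m / (x-1)^d" using x1 dm by (simp add: power_diff)
  also have "real k^(c-1) * x^d * ((x-1)^m / (x-1)^d) = real k^(c-1) * (x - 1)^m * (x / (x - 1))^d"
    by (simp add: power_divide)
  finally show ?thesis by (simp add: x_def)
qed

lemma y_inj:
  fixes a :: nat assumes a: "a \<ge> 1"
  shows "inj_on (\<lambda>k::nat. real k^a / (real k^a - 1)) {k. k \<ge> 2}"
proof
  fix k l :: nat assume k: "k \<in> {k. k \<ge> 2}" and l: "l \<in> {k. k \<ge> 2}"
    and eq: "real k^a / (real k^a - 1) = real l^a / (real l^a - 1)"
  have xk: "real k^a > 1" using k a by (simp add: one_less_power)
  have xl: "real l^a > 1" using l a by (simp add: one_less_power)
  have d1: "real k^a - 1 \<noteq> 0" using xk by simp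
  have d2: "real l^a - 1 \<noteq> 0" using xl by simp
  have "real k^a * (real l^a - 1) = real l^a * (real k^a - 1)" using eq d1 d2 by (simp add: frac_eq_eq)
  then have "real k^a * real l^a - real k^a = real l^a * real k^a - real l^a" by (simp add: right_diff_distrib)
  then have "real k^a = real l^a" by (simp add: mult.commute)
  then have "real (k^a) = real (l^a)" by simp
  then have kl: "k^a = l^a" by (simp only: of_nat_eq_iff)
  have "0 < a" using a by simp
  then show "k = l" using power_eq_imp_eq_base[OF kl] by simp
qed

lemma y_infinite:
  fixes a :: nat assumes a: "a \<ge> 1"
  shows "infinite ((\<lambda>k::nat. real k^a / (real k^a - 1)) ` {k. k \<ge> 2})"
proof -
  have "infinite {k::nat. k \<ge> 2}" unfolding infinite_nat_iff_unbounded_le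
  proof
    fix m :: nat show "\<exists>n\<ge>m. n \<in> {k. k \<ge> 2}" by (rule exI[of _ "m + 2"]) simp
  qed
  then show ?thesis using finite_imageD y_inj[OF a] by blast
qed

lemma sum_real_factor:
  fixes k a c m :: nat and V :: "'a set" and d :: "'a \<Rightarrow> nat"
  assumes k: "k \<ge> 2" and a: "a \<ge> 1" and dm: "\<forall>v\<in>V. d v \<le> m"
  shows "real (\<Sum>v\<in>V. k^(c - 1 + a*d v) * (k^a-1)^(m - d v))
       = real k^(c-1) * (real k^a - 1)^m * (\<Sum>v\<in>V. (real k^a / (real k^a - 1))^d v)"
proof -
  have "real (\<Sum>v\<in>V. k^(c - 1 + a*d v) * (k^a-1)^(m - d v))
      = (\<Sum>v\<in>V. real (k^(c - 1 + a*d v) * (k^a-1)^(m - d v)))" by (rule of_nat_sum)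
  also have "\<dots> = (\<Sum>v\<in>V. real k^(c-1) * (real k^a - 1)^m * (real k^a / (real k^a - 1))^d v)"
    by (rule sum.cong[OF refl]) (use term_real[OF k a] dm in blast)
  also have "\<dots> = real k^(c-1) * (real k^a - 1)^m * (\<Sum>v\<in>V. (real k^a / (real k^a - 1))^d v)"
    by (simp add: sum_distrib_left)
  finally show ?thesis .
qed

lemma counts_imp_degseq:
  assumes fV: "finite V" and fV': "finite V'"
    and cnt: "\<And>j. card {v\<in>V. Defs.degree E v = j} = card {w\<in>V'. Defs.degree E' w = j}"
  shows "degree_sequence V E = degree_sequence V' E'"
proof -
  have "image_mset (Defs.degree E) (mset_set V) = image_mset (Defs.degree E') (mset_set V')"
  proof (rule multiset_eqI)
    fix j
    show "count (image_mset (Defs.degree E) (mset_set V)) j = count (image_mset (Defs.degree E') (mset_set V')) j"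
      unfolding count_deg[OF fV] count_deg[OF fV'] by (rule cnt)
  qed
  then show ?thesis by (simp add: degree_sequence_def)
qed

theorem main:
  fixes V :: "'a set" and E :: "'a set set" and V' :: "'b set" and E' :: "'b set set"
    and s s' :: nat
  assumes "hypertree V E" and "s \<ge> 2" and "uniform s E"
    and "hypertree V' E'" and "s' \<ge> 2" and "uniform s' E'"
    and "csf V E = csf V' E'"
  shows "degree_sequence V E = degree_sequence V' E'"
proof -
  note ht = hypertree_facts[OF assms(1)] and ht' = hypertree_facts[OF assms(4)]
  have fV: "finite V" and hyp: "\<forall>e\<in>E. e \<subseteq> V \<and> card e \<ge> 2" and ac: "\<not>(\<exists>vs es. is_cycle E vs es)"
    using ht by blast+
  have fV': "finite V'" and hyp': "\<forall>e\<in>E'. e \<subseteq> V' \<and> card e \<ge> 2" and ac': "\<not>(\<exists>vs es. is_cycle E' vs es)"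
    using ht' by blast+
  have fE: "finite E" using hyp fV by (meson Pow_iff finite_Pow_iff finite_subset subsetI)
  have fE': "finite E'" using hyp' fV' by (meson Pow_iff finite_Pow_iff finite_subset subsetI)
  define a where "a = s - 1"
  define b where "b = s' - 1"
  define m where "m = card E"
  define m' where "m' = card E'"
  define c where "c = card V - a * m"
  define c' where "c' = card V' - b * m'"
  have a1: "a \<ge> 1" and b1: "b \<ge> 1" using assms(2,5) by (simp_all add: a_def b_def)
  have CF: "\<And>k. (V \<noteq> {} \<longrightarrow> a*m < card V) \<and> a*m \<le> card V \<and> chi V E k = k^c * (k^a-1)^m"
    using chi_forest[OF fV hyp assms(3) ac] by (simp add: a_def m_def c_def)
  have CF': "\<And>k. (V' \<noteq> {} \<longrightarrow> b*m' < card V') \<and> b*m' \<le> card V' \<and> chi V' E' k = k^c' * (k^b-1)^m'"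
    using chi_forest[OF fV' hyp' assms(6) ac'] by (simp add: b_def m'_def c'_def)
  have chieq: "\<And>k. chi V E k = chi V' E' k"
    using chi_csf[OF fV] chi_csf[OF fV'] assms(7) by simp
  have "\<forall>k::nat\<ge>1. k^c * (k^a-1)^m = k^c' * (k^b - 1)^m'"
    using CF CF' chieq by metis
  then have PE: "c = c' \<and> m = m' \<and> (m \<ge> 1 \<longrightarrow> a = b)" by (rule params_eq[OF a1 b1])
  have nV: "card V = c + a*m" using CF[of 0] by (simp add: c_def)
  have nV': "card V' = c' + b*m'" using CF'[of 0] by (simp add: c'_def)
  show ?thesis
  proof (cases "m = 0")
    case True
    then have E0: "E = {}" using fE by (simp add: m_def)
    have E0': "E' = {}" using fE' PE True by (simp add: m'_def)
    have nn: "card V = card V'" using nV nV' PE True by simp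
    show ?thesis
    proof (rule counts_imp_degseq[OF fV fV'])
      fix j
      show "card {v\<in>V. Defs.degree E v = j} = card {w\<in>V'. Defs.degree E' w = j}"
        using nn by (cases "j = 0") (simp_all add: E0 E0' Defs.degree_def)
    qed
  next
    case False
    then have m1: "m \<ge> 1" by simp
    have ab: "a = b" using PE m1 by simp
    have cc: "c = c'" and mm: "m = m'" using PE by simp_all
    have Vne: "V \<noteq> {}"
    proof -
      obtain e where e: "e \<in> E" using False fE by (metis card.empty ex_in_conv m_def)
      then have "card e \<ge> 2" "e \<subseteq> V" using hyp by blast+
      then show ?thesis by (metis card.empty not_numeral_le_zero subset_empty)
    qed
    have Vne': "V' \<noteq> {}"
    proof -
      obtain e where e: "e \<in> E'" using False fE' mm by (metis card.empty ex_in_conv m'_def)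
      then have "card e \<ge> 2" "e \<subseteq> V'" using hyp' by blast+
      then show ?thesis by (metis card.empty not_numeral_le_zero subset_empty)
    qed
    have c1: "c \<ge> 1" using CF[of 0] Vne nV by simp
    have c1': "c' \<ge> 1" using CF'[of 0] Vne' nV' by simp
    have GF: "Gk V E k = (\<Sum>v\<in>V. k^(c - 1 + a*Defs.degree E v) * (k^a-1)^(m - Defs.degree E v))" for k
    proof -
      have "Gk V E k = (\<Sum>v\<in>V. chi (V - {v}) {e\<in>E. v \<notin> e} k)" by (rule G_decomp[OF fV hyp])
      also have "\<dots> = (\<Sum>v\<in>V. k^(c - 1 + a*Defs.degree E v) * (k^a-1)^(m - Defs.degree E v))"
      proof (rule sum.cong[OF refl])
        fix v assume v: "v \<in> V"
        have nV2: "card V = c + (s-1) * card E" using nV by (simp add: a_def m_def)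
        show "chi (V - {v}) {e\<in>E. v \<notin> e} k = k^(c - 1 + a*Defs.degree E v) * (k^a-1)^(m - Defs.degree E v)"
          using chi_v_formula[OF fV hyp assms(3) ac v nV2 c1] by (simp add: a_def m_def)
      qed
      finally show ?thesis .
    qed
    have GF': "Gk V' E' k = (\<Sum>v\<in>V'. k^(c - 1 + a*Defs.degree E' v) * (k^a-1)^(m - Defs.degree E' v))" for k
    proof -
      have "Gk V' E' k = (\<Sum>v\<in>V'. chi (V' - {v}) {e\<in>E'. v \<notin> e} k)" by (rule G_decomp[OF fV' hyp'])
      also have "\<dots> = (\<Sum>v\<in>V'. k^(c - 1 + a*Defs.degree E' v) * (k^a-1)^(m - Defs.degree E' v))"
      proof (rule sum.cong[OF refl])
        fix v assume v: "v \<in> V'"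
        have nV2: "card V' = c' + (s'-1) * card E'" using nV' by (simp add: b_def m'_def)
        show "chi (V' - {v}) {e\<in>E'. v \<notin> e} k = k^(c - 1 + a*Defs.degree E' v) * (k^a-1)^(m - Defs.degree E' v)"
          using chi_v_formula[OF fV' hyp' assms(6) ac' v nV2 c1'] cc mm ab by (simp add: b_def m'_def)
      qed
      finally show ?thesis .
    qed
    have Geq: "Gk V E k = Gk V' E' k" for k
      using Gk_csf[OF fV] Gk_csf[OF fV'] assms(7) by simp
    have dm: "\<forall>v\<in>V. Defs.degree E v \<le> m" unfolding Defs.degree_def m_def using fE by (simp add: card_mono)
    have dm': "\<forall>v\<in>V'. Defs.degree E' v \<le> m" unfolding Defs.degree_def mm m'_def using fE' by (simp add: card_mono)
    define Y where "Y = (\<lambda>k::nat. real k^a / (real k^a - 1)) ` {k. k \<ge> 2}"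
    have sums: "\<forall>y\<in>Y. (\<Sum>v\<in>V. y ^ Defs.degree E v) = (\<Sum>w\<in>V'. y ^ Defs.degree E' w)"
    proof
      fix y assume "y \<in> Y"
      then obtain k where k: "k \<ge> 2" "y = real k^a / (real k^a - 1)" by (auto simp: Y_def)
      define K where "K = real k^(c-1) * (real k^a - 1)^m"
      have Kpos: "K \<noteq> 0"
      proof -
        have "real k^a > 1" using k a1 by (simp add: one_less_power)
        then show ?thesis using k by (simp add: K_def)
      qed
      have "K * (\<Sum>v\<in>V. y ^ Defs.degree E v) = real (Gk V E k)"
        using sum_real_factor[OF k(1) a1 dm, of c] GF[of k] k(2) by (simp add: K_def)
      also have "\<dots> = real (Gk V' E' k)" using Geq by simp
      also have "\<dots> = K * (\<Sum>v\<in>V'. y ^ Defs.degree E' v)"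
        using sum_real_factor[OF k(1) a1 dm', of c] GF'[of k] k(2) by (simp add: K_def)
      finally show "(\<Sum>v\<in>V. y ^ Defs.degree E v) = (\<Sum>w\<in>V'. y ^ Defs.degree E' w)" using Kpos by simp
    qed
    have infY: "infinite Y" unfolding Y_def by (rule y_infinite[OF a1])
    show ?thesis
      by (rule counts_imp_degseq[OF fV fV']) (rule degrees_from_sums[OF fV fV' infY sums])
  qed
qed

theorem proposition4p3:
  fixes V :: "'a set" and E :: "'a set set" and V' :: "'b set" and E' :: "'b set set"
    and s s' :: nat
  assumes "hypertree V E" and "s \<ge> 2" and "uniform s E"
    and "hypertree V' E'" and "s' \<ge> 2" and "uniform s' E'"
    and "csf V E = csf V' E'"
  shows "degree_sequence V E = degree_sequence V' E'"
    by (rule main[OF assms])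

end
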